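(* Let $P$ be a poset. Let $F_P:\mathbf{JF}_P\to\mathbf{JC}_P$ be the functor sending a frame-generating join-specification $\mathcal{U}$ to the join-completion $\eta:P\to\mathcal{I}_{\mathcal{U}}$, $p\mapsto p^\downarrow$, and sending an inclusion $\mathcal{U}_1\subseteq\mathcal{U}_2$ to the unique frame morphism $\mathcal{I}_{\mathcal{U}_1}\to\mathcal{I}_{\mathcal{U}_2}$ with $p^\downarrow\mapsto p^\downarrow$. Let $G_P:\mathbf{JC}_P\to\mathbf{JF}_P$ send a join-completion $e$ to $(\mathcal{U}_e)^-$ and an arrow $e_1\to e_2$ to the inclusion $(\mathcal{U}_{e_1})^-\subseteq(\mathcal{U}_{e_2})^-$. Then $F_P$ is left adjoint to $G_P$.
   Context: A join-specification for $P$ is a set $\mathcal{U}\subseteq\wp(P)$ such that $\bigvee S$ exists in $P$ for every $S\in\mathcal{U}$ and $\{p\}\in\mathcal{U}$ for every $p\in P$. A $\mathcal{U}$-ideal is a down-closed $C\subseteq P$ with $\bigvee S\in C$ whenever $S\in\mathcal{U}$, $S\subseteq C$; $\mathcal{I}_{\mathcal{U}}$ is the complete lattice of $\mathcal{U}$-ideals under inclusion; $\mathcal{U}$ is frame-generating if $\mathcal{I}_{\mathcal{U}}$ is a frame. A frame morphism is a lattice homomorphism preserving arbitrary joins. $\mathbf{JF}_P$ is the poset (thin category) of frame-generating join-specifications for $P$ under inclusion. A join-completion of $P$ is an order embedding $e:P\to L$ into a complete lattice $L$ such that every $x\in L$ is the join of $\{e(p):e(p)\le x\}$. $\mathbf{JC}_P$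 is the category whose objects are join-completions of $P$ and whose arrows $e_1\to e_2$ (for $e_i:P\to L_i$) are completely join-preserving maps $f:L_1\to L_2$ with $f\circ e_1=e_2$. For a join-completion $e:P\to L$, $\mathcal{U}_e=\{S\subseteq P:\bigvee S\text{ exists in }P\text{ and }e(\bigvee S)=\bigvee e[S]\}$ (equivalently $\bigvee S\in\Gamma_e(S)$, where $\Gamma_e$ is the closure operator whose closed sets are the sets $e^{-1}(x^\downarrow)$, $x\in L$). For a join-specification $\mathcal{V}$, $\mathcal{V}^-$ is the largest frame-generating join-specification contained in $\mathcal{V}$ (which exists). *)

theory Defs
  imports Main
begin

definition is_join :: "'a::order set \<Rightarrow> 'a \<Rightarrow> bool" where
  "is_join S s \<longleftrightarrow> (\<forall>x\<in>S. x \<le> s) \<and> (\<forall>y. (\<forall>x\<in>S. x \<le> y) \<longrightarrow> s \<le> y)"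

definition has_join :: "'a::order set \<Rightarrow> bool" where
  "has_join S \<longleftrightarrow> (\<exists>s. is_join S s)"

definition pjoin :: "'a::order set \<Rightarrow> 'a" where
  "pjoin S = (THE s. is_join S s)"

definition down :: "'a::order \<Rightarrow> 'a set" where
  "down p = {x. x \<le> p}"

definition join_spec :: "'a::order set set \<Rightarrow> bool" where
  "join_spec U \<longleftrightarrow> (\<forall>S\<in>U. has_join S) \<and> (\<forall>p. {p} \<in> U)"

definition U_ideal :: "'a::order set set \<Rightarrow> 'a set \<Rightarrow> bool" where
  "U_ideal U C \<longleftrightarrow> (\<forall>x y. x \<in> C \<longrightarrow> y \<le> x \<longrightarrow> y \<in> C)
                   \<and> (\<forall>S\<in>U. S \<subseteq> C \<longrightarrow> pjoin S \<in> C)"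

definition ideals :: "'a::order set set \<Rightarrow> 'a set set" where
  "ideals U = {C. U_ideal U C}"

text \<open>Join in a family of sets ordered by inclusion and closed under arbitrary
  intersections (as the family of U-ideals is): least member containing the union.\<close>
definition sup_in :: "'a set set \<Rightarrow> 'a set set \<Rightarrow> 'a set" where
  "sup_in L X = \<Inter>{C\<in>L. \<Union>X \<subseteq> C}"

definition frame_generating :: "'a::order set set \<Rightarrow> bool" where
  "frame_generating U \<longleftrightarrow> join_spec U \<and>
     (\<forall>a\<in>ideals U. \<forall>B\<subseteq>ideals U.
        a \<inter> sup_in (ideals U) B = sup_in (ideals U) ((\<lambda>b. a \<inter> b) ` B))"

definition join_completion :: "('a::order \<Rightarrow> 'b::complete_lattice) \<Rightarrow> bool" where
  "join_completion e \<longleftrightarrow> (\<forall>x y. e x \<le> e y \<longleftrightarrow> x \<le> y)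
                         \<and> (\<forall>x. x = Sup {e p | p. e p \<le> x})"

definition U_of :: "('a::order \<Rightarrow> 'b::complete_lattice) \<Rightarrow> 'a set set" where
  "U_of e = {S. has_join S \<and> e (pjoin S) = Sup (e ` S)}"

definition fg_core :: "'a::order set set \<Rightarrow> 'a set set" where
  "fg_core V = (THE W. frame_generating W \<and> W \<subseteq> V \<and>
                      (\<forall>W'. frame_generating W' \<and> W' \<subseteq> V \<longrightarrow> W' \<subseteq> W))"

text \<open>Arrows in JC_P from F_P(U) = (eta : P \<rightarrow> I_U, p \<mapsto> down p) to e : P \<rightarrow> L:
  completely join-preserving maps f : I_U \<rightarrow> L with f (down p) = e p.
  (Maps are compared only on the carrier I_U.)\<close>
definition jc_arrow_from_F ::
  "'a::order set set \<Rightarrow> ('a \<Rightarrow> 'b::complete_lattice) \<Rightarrow> ('a set \<Rightarrow> 'b) \<Rightarrow> bool" where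
  "jc_arrow_from_F U e f \<longleftrightarrow>
     (\<forall>X\<subseteq>ideals U. f (sup_in (ideals U) X) = Sup (f ` X))
     \<and> (\<forall>p. f (down p) = e p)"

end

theory Submission
  imports Defs
begin

lemma is_join_unique: "is_join S a \<Longrightarrow> is_join S b \<Longrightarrow> a = b"
  unfolding is_join_def by (meson order.antisym)

lemma pjoin_is_join: "has_join S \<Longrightarrow> is_join S (pjoin S)"
  unfolding has_join_def pjoin_def by (metis is_join_unique theI)

lemma pjoin_upper: "has_join S \<Longrightarrow> x \<in> S \<Longrightarrow> x \<le> pjoin S"
  using pjoin_is_join is_join_def by blast

lemma pjoin_least: "has_join S \<Longrightarrow> (\<forall>x\<in>S. x \<le> y) \<Longrightarrow> pjoin S \<le> y"
  using pjoin_is_join is_join_def by blast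

lemma pjoin_single: "pjoin {p} = p"
proof -
  have "is_join {p} p" unfolding is_join_def by auto
  then show ?thesis using pjoin_is_join has_join_def is_join_unique by blast
qed

definition cl :: "'a::order set set \<Rightarrow> 'a set \<Rightarrow> 'a set" where
  "cl U A = \<Inter>{C. U_ideal U C \<and> A \<subseteq> C}"

lemma sup_in_cl: "sup_in (ideals U) X = cl U (\<Union>X)"
  unfolding sup_in_def cl_def ideals_def by auto

lemma U_ideal_Inter: "\<forall>C\<in>F. U_ideal U C \<Longrightarrow> U_ideal U (\<Inter>F)"
  unfolding U_ideal_def
proof (intro conjI allI impI ballI)
  fix x y assume h: "\<forall>C\<in>F. (\<forall>x y. x \<in> C \<longrightarrow> y \<le> x \<longrightarrow> y \<in> C) \<and> (\<forall>S\<in>U. S \<subseteq> C \<longrightarrow> pjoin S \<in> C)"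
    and "x \<in> \<Inter>F" "y \<le> x"
  then show "y \<in> \<Inter>F" by blast
next
  fix S assume h: "\<forall>C\<in>F. (\<forall>x y. x \<in> C \<longrightarrow> y \<le> x \<longrightarrow> y \<in> C) \<and> (\<forall>S\<in>U. S \<subseteq> C \<longrightarrow> pjoin S \<in> C)"
    and "S \<in> U" "S \<subseteq> \<Inter>F"
  show "pjoin S \<in> \<Inter>F"
  proof (rule InterI)
    fix X assume X: "X \<in> F"
    then have "S \<subseteq> X" using \<open>S \<subseteq> \<Inter>F\<close> by blast
    then show "pjoin S \<in> X" using h X \<open>S \<in> U\<close> by blast
  qed
qed

lemma U_ideal_Int: "U_ideal U a \<Longrightarrow> U_ideal U b \<Longrightarrow> U_ideal U (a \<inter> b)"
  using U_ideal_Inter[of "{a, b}" U] by simp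

lemma cl_ideal: "U_ideal U (cl U A)"
  unfolding cl_def by (rule U_ideal_Inter) auto

lemma cl_sub: "A \<subseteq> cl U A"
  unfolding cl_def by auto

lemma cl_least: "U_ideal U C \<Longrightarrow> A \<subseteq> C \<Longrightarrow> cl U A \<subseteq> C"
  unfolding cl_def by auto

lemma cl_id: "U_ideal U C \<Longrightarrow> cl U C = C"
  using cl_sub cl_least by blast

lemma ideal_anti: "W1 \<subseteq> W \<Longrightarrow> U_ideal W C \<Longrightarrow> U_ideal W1 C"
  unfolding U_ideal_def by blast

lemma cl_mono_U: "W1 \<subseteq> W \<Longrightarrow> cl W1 A \<subseteq> cl W A"
  by (rule cl_least[OF ideal_anti cl_sub]) (auto intro: cl_ideal)

lemma down_ideal: "join_spec U \<Longrightarrow> U_ideal U (down q)"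
  unfolding U_ideal_def down_def join_spec_def
  using pjoin_least by fastforce

lemma cl_downs: "join_spec U \<Longrightarrow> S \<in> U \<Longrightarrow> cl U (\<Union>(down ` S)) = down (pjoin S)"
proof -
  assume j: "join_spec U" and S: "S \<in> U"
  have hj: "has_join S" using j S join_spec_def by blast
  show ?thesis
  proof
    show "cl U (\<Union>(down ` S)) \<subseteq> down (pjoin S)"
      by (rule cl_least[OF down_ideal[OF j]]) (auto simp: down_def intro: order_trans pjoin_upper[OF hj])
    have "S \<subseteq> cl U (\<Union>(down ` S))" using cl_sub[of "\<Union>(down ` S)" U] by (auto simp: down_def)
    then have "pjoin S \<in> cl U (\<Union>(down ` S))" using cl_ideal[of U] S unfolding U_ideal_def by blast
    then show "down (pjoin S) \<subseteq> cl U (\<Union>(down ` S))"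
      using cl_ideal[of U "\<Union>(down ` S)"] unfolding U_ideal_def down_def by blast
  qed
qed

definition star :: "'a::order set set \<Rightarrow> bool" where
  "star U \<longleftrightarrow> (\<forall>S\<in>U. \<forall>p. p \<le> pjoin S \<longrightarrow> p \<in> cl U (\<Union>s\<in>S. down p \<inter> down s))"

lemma fg_star: "frame_generating U \<Longrightarrow> star U"
proof -
  assume fg: "frame_generating U"
  have j: "join_spec U" using fg frame_generating_def by blast
  show ?thesis unfolding star_def
  proof (intro ballI allI impI)
    fix S p assume S: "S \<in> U" and p: "p \<le> pjoin S"
    have B: "down ` S \<subseteq> ideals U" using down_ideal[OF j] by (auto simp: ideals_def)
    have a: "down p \<in> ideals U" using down_ideal[OF j] by (auto simp: ideals_def)
    have "p \<in> down p \<inter> sup_in (ideals U) (down ` S)"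
      using cl_downs[OF j S] p by (simp add: sup_in_cl down_def)
    also have "\<dots> = sup_in (ideals U) ((\<lambda>b. down p \<inter> b) ` down ` S)"
      using fg a B unfolding frame_generating_def by blast
    also have "\<dots> = cl U (\<Union>s\<in>S. down p \<inter> down s)"
      by (simp add: sup_in_cl image_image)
    finally show "p \<in> cl U (\<Union>s\<in>S. down p \<inter> down s)" .
  qed
qed

lemma star_fg: "join_spec U \<Longrightarrow> star U \<Longrightarrow> frame_generating U"
proof -
  assume j: "join_spec U" and st: "star U"
  have H: "a \<inter> cl U (\<Union>B) = cl U (\<Union>((\<lambda>b. a \<inter> b) ` B))"
    if a: "U_ideal U a" and B: "\<forall>b\<in>B. U_ideal U b" for a B
  proof (rule equalityI)
    define D where "D = cl U (\<Union>((\<lambda>b. a \<inter> b) ` B))"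
    have Di: "U_ideal U D" unfolding D_def by (rule cl_ideal)
    have aI: "U_ideal U (a \<inter> cl U (\<Union>B))"
      using U_ideal_Int[OF a cl_ideal] .
    have "\<Union>((\<lambda>b. a \<inter> b) ` B) \<subseteq> a \<inter> cl U (\<Union>B)"
    proof
      fix x assume "x \<in> \<Union>((\<lambda>b. a \<inter> b) ` B)"
      then obtain b where "b \<in> B" "x \<in> a" "x \<in> b" by blast
      then show "x \<in> a \<inter> cl U (\<Union>B)" using cl_sub[of "\<Union>B" U] by blast
    qed
    then show "cl U (\<Union>((\<lambda>b. a \<inter> b) ` B)) \<subseteq> a \<inter> cl U (\<Union>B)"
      by (rule cl_least[OF aI])
    define E where "E = {x. \<forall>y. y \<le> x \<longrightarrow> y \<in> a \<longrightarrow> y \<in> D}"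
    have "U_ideal U E"
      unfolding U_ideal_def
    proof (intro conjI allI impI ballI)
      fix x y assume "x \<in> E" "y \<le> x" then show "y \<in> E" unfolding E_def using order_trans by blast
    next
      fix S assume S: "S \<in> U" and SE: "S \<subseteq> E"
      show "pjoin S \<in> E" unfolding E_def
      proof (intro CollectI allI impI)
        fix y assume y: "y \<le> pjoin S" "y \<in> a"
        have "(\<Union>s\<in>S. down y \<inter> down s) \<subseteq> D"
        proof
          fix z assume "z \<in> (\<Union>s\<in>S. down y \<inter> down s)"
          then obtain s where "s \<in> S" "z \<le> y" "z \<le> s" by (auto simp: down_def)
          moreover have "z \<in> a" using a y(2) \<open>z \<le> y\<close> unfolding U_ideal_def by blast
          ultimately show "z \<in> D" using SE unfolding E_def by blast
        qed
        then have "cl U (\<Union>s\<in>S. down y \<inter> down s) \<subseteq> D" by (rule cl_least[OF Di])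
        moreover have "y \<in> cl U (\<Union>s\<in>S. down y \<inter> down s)"
          using st S y(1) unfolding star_def by simp
        ultimately show "y \<in> D" by blast
      qed
    qed
    moreover have "\<Union>B \<subseteq> E"
    proof
      fix x assume "x \<in> \<Union>B"
      then obtain b where b: "b \<in> B" "x \<in> b" by blast
      show "x \<in> E" unfolding E_def
      proof (intro CollectI allI impI)
        fix y assume "y \<le> x" "y \<in> a"
        then have "y \<in> a \<inter> b" using B b unfolding U_ideal_def by blast
        then have "y \<in> \<Union>((\<lambda>b. a \<inter> b) ` B)" using b(1) by blast
        then show "y \<in> D" unfolding D_def using cl_sub[of "\<Union>((\<lambda>b. a \<inter> b) ` B)" U] by (rule subsetD[rotated])
      qed
    qed
    ultimately have "cl U (\<Union>B) \<subseteq> E" by (rule cl_least)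
    then have "a \<inter> cl U (\<Union>B) \<subseteq> D" unfolding E_def by blast
    then show "a \<inter> cl U (\<Union>B) \<subseteq> cl U (\<Union>((\<lambda>b. a \<inter> b) ` B))" by (simp add: D_def)
  qed
  show ?thesis unfolding frame_generating_def sup_in_cl
  proof (intro conjI ballI allI impI)
    show "join_spec U" by (rule j)
  next
    fix a B assume a: "a \<in> ideals U" and B: "B \<subseteq> ideals U"
    have "\<forall>b\<in>B. U_ideal U b" using B by (auto simp: ideals_def)
    moreover have "U_ideal U a" using a by (simp add: ideals_def)
    ultimately show "a \<inter> cl U (\<Union>B) = cl U (\<Union>((\<inter>) a ` B))" using H by blast
  qed
qed


lemma single_star: "p \<le> pjoin {q} \<Longrightarrow> p \<in> cl W (\<Union>s\<in>{q}. down p \<inter> down s)"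
proof -
  assume "p \<le> pjoin {q}"
  then have "p \<in> (\<Union>s\<in>{q}. down p \<inter> down s)" by (simp add: pjoin_single down_def)
  then show ?thesis by (rule subsetD[OF cl_sub])
qed

lemma has_join_single: "has_join {p}"
  unfolding has_join_def is_join_def by auto

lemma fg_core_props:
  assumes V: "join_spec V"
  shows "frame_generating (fg_core V) \<and> fg_core V \<subseteq> V \<and>
         (\<forall>W'. frame_generating W' \<and> W' \<subseteq> V \<longrightarrow> W' \<subseteq> fg_core V)"
proof -
  define F where "F = {W'. frame_generating W' \<and> W' \<subseteq> V}"
  define W0 where "W0 = {{p} | p. True} \<union> \<Union>F"
  have sub: "W0 \<subseteq> V" using V unfolding W0_def F_def join_spec_def by auto
  have js: "join_spec W0"
    unfolding join_spec_def
  proof (intro conjI ballI allI)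
    fix S assume "S \<in> W0" then have "S \<in> V" using sub by blast
    then show "has_join S" using V unfolding join_spec_def by blast
  next
    fix p show "{p} \<in> W0" unfolding W0_def by blast
  qed
  have st: "star W0"
    unfolding star_def
  proof (intro ballI allI impI)
    fix S p assume S: "S \<in> W0" and p: "p \<le> pjoin S"
    show "p \<in> cl W0 (\<Union>s\<in>S. down p \<inter> down s)"
    proof (cases "S \<in> {{p} | p. True}")
      case True
      then obtain q where "S = {q}" by blast
      then show ?thesis using p single_star[of p q W0] by simp
    next
      case False
      then obtain W' where W': "W' \<in> F" "S \<in> W'" using S unfolding W0_def by blast
      then have "star W'" using fg_star unfolding F_def by blast
      then have "p \<in> cl W' (\<Union>s\<in>S. down p \<inter> down s)" using W'(2) p unfolding star_def by blast
      moreover have "W' \<subseteq> W0" using W'(1) unfolding W0_def by blast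
      ultimately show ?thesis using cl_mono_U[of W' W0] by blast
    qed
  qed
  have fg: "frame_generating W0" by (rule star_fg[OF js st])
  have mx: "\<forall>W'. frame_generating W' \<and> W' \<subseteq> V \<longrightarrow> W' \<subseteq> W0"
    unfolding W0_def F_def by blast
  have P: "frame_generating W0 \<and> W0 \<subseteq> V \<and> (\<forall>W'. frame_generating W' \<and> W' \<subseteq> V \<longrightarrow> W' \<subseteq> W0)"
    using fg sub mx by blast
  have "fg_core V = W0"
    unfolding fg_core_def
  proof (rule the_equality)
    show "frame_generating W0 \<and> W0 \<subseteq> V \<and> (\<forall>W'. frame_generating W' \<and> W' \<subseteq> V \<longrightarrow> W' \<subseteq> W0)"
      by (rule P)
  next
    fix W assume "frame_generating W \<and> W \<subseteq> V \<and> (\<forall>W'. frame_generating W' \<and> W' \<subseteq> V \<longrightarrow> W' \<subseteq> W)"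
    then have W: "frame_generating W" "W \<subseteq> V" "\<forall>W'. frame_generating W' \<and> W' \<subseteq> V \<longrightarrow> W' \<subseteq> W" by auto
    have "W \<subseteq> W0" using mx W(1,2) by blast
    moreover have "W0 \<subseteq> W" using W(3) fg sub by blast
    ultimately show "W = W0" by (rule order.antisym)
  qed
  then show ?thesis using P by simp
qed

lemma ideal_as_sup:
  assumes j: "join_spec U" and C: "U_ideal U C"
  shows "sup_in (ideals U) (down ` C) = C" "down ` C \<subseteq> ideals U"
proof -
  have "\<Union>(down ` C) = C"
  proof
    show "\<Union>(down ` C) \<subseteq> C" using C unfolding U_ideal_def down_def by blast
    show "C \<subseteq> \<Union>(down ` C)" unfolding down_def by blast
  qed
  then show "sup_in (ideals U) (down ` C) = C" by (simp add: sup_in_cl cl_id[OF C])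
  show "down ` C \<subseteq> ideals U" using down_ideal[OF j] by (auto simp: ideals_def)
qed

lemma arrow_unique:
  assumes j: "join_spec U" and f: "jc_arrow_from_F U e f" and C: "C \<in> ideals U"
  shows "f C = Sup (e ` C)"
proof -
  have Ci: "U_ideal U C" using C by (simp add: ideals_def)
  have "f C = f (sup_in (ideals U) (down ` C))" using ideal_as_sup(1)[OF j Ci] by simp
  also have "\<dots> = Sup (f ` down ` C)" using f ideal_as_sup(2)[OF j Ci] unfolding jc_arrow_from_F_def by blast
  also have "\<dots> = Sup (e ` C)" using f unfolding jc_arrow_from_F_def by (simp add: image_image)
  finally show ?thesis .
qed

lemma U_of_js: "join_spec (U_of e)"
  unfolding join_spec_def U_of_def by (auto simp: has_join_single pjoin_single)

theorem theorem5p13: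
  fixes U :: "'a::order set set" and e :: "'a \<Rightarrow> 'b::complete_lattice"
  assumes "frame_generating U" and "join_completion e"
  shows "((\<exists>f. jc_arrow_from_F U e f) \<longleftrightarrow> U \<subseteq> fg_core (U_of e))
         \<and> (\<forall>f g. jc_arrow_from_F U e f \<longrightarrow> jc_arrow_from_F U e g \<longrightarrow>
                  (\<forall>C\<in>ideals U. f C = g C))"
proof -
  have j: "join_spec U" using assms(1) frame_generating_def by blast
  have mono: "\<And>x y. x \<le> y \<Longrightarrow> e x \<le> e y" using assms(2) unfolding join_completion_def by blast
  have core: "frame_generating (fg_core (U_of e)) \<and> fg_core (U_of e) \<subseteq> U_of e \<and>
         (\<forall>W'. frame_generating W' \<and> W' \<subseteq> U_of e \<longrightarrow> W' \<subseteq> fg_core (U_of e))"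
    by (rule fg_core_props[OF U_of_js])
  have uniq: "\<forall>f g. jc_arrow_from_F U e f \<longrightarrow> jc_arrow_from_F U e g \<longrightarrow>
                  (\<forall>C\<in>ideals U. f C = g C)"
    using arrow_unique[OF j] by metis
  have fwd: "U \<subseteq> fg_core (U_of e)" if f: "jc_arrow_from_F U e f" for f
  proof -
    have "U \<subseteq> U_of e"
    proof
      fix S assume S: "S \<in> U"
      have hj: "has_join S" using j S join_spec_def by blast
      have "e (pjoin S) = f (down (pjoin S))" using f unfolding jc_arrow_from_F_def by simp
      also have "\<dots> = f (sup_in (ideals U) (down ` S))" by (simp add: sup_in_cl cl_downs[OF j S])
      also have "\<dots> = Sup (f ` down ` S)"
      proof -
        have "down ` S \<subseteq> ideals U" using down_ideal[OF j] by (auto simp: ideals_def)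
        then show ?thesis using f unfolding jc_arrow_from_F_def by blast
      qed
      also have "\<dots> = Sup (e ` S)" using f unfolding jc_arrow_from_F_def by (simp add: image_image)
      finally show "S \<in> U_of e" using hj unfolding U_of_def by blast
    qed
    then show ?thesis using core assms(1) by blast
  qed
  have bwd: "\<exists>f. jc_arrow_from_F U e f" if sub: "U \<subseteq> fg_core (U_of e)"
  proof -
    have UU: "U \<subseteq> U_of e" using sub core by blast
    define f where "f = (\<lambda>C. Sup (e ` C))"
    have "jc_arrow_from_F U e f"
      unfolding jc_arrow_from_F_def
    proof (intro conjI allI impI)
      fix p
      show "f (down p) = e p"
        unfolding f_def
      proof (rule order.antisym)
        show "Sup (e ` down p) \<le> e p" by (rule SUP_least) (simp add: down_def mono)
        show "e p \<le> Sup (e ` down p)" by (rule SUP_upper) (simp add: down_def)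
      qed
    next
      fix X assume X: "X \<subseteq> ideals U"
      define T where "T = Sup (e ` \<Union>X)"
      define E where "E = {x. e x \<le> T}"
      have "U_ideal U E"
        unfolding U_ideal_def
      proof (intro conjI allI impI ballI)
        fix x y assume "x \<in> E" "y \<le> x" then show "y \<in> E"
          unfolding E_def using mono order_trans by blast
      next
        fix S assume S: "S \<in> U" "S \<subseteq> E"
        have "e (pjoin S) = Sup (e ` S)" using UU S(1) unfolding U_of_def by blast
        also have "\<dots> \<le> T" using S(2) unfolding E_def by (auto intro: SUP_least)
        finally show "pjoin S \<in> E" unfolding E_def by simp
      qed
      moreover have "\<Union>X \<subseteq> E" unfolding E_def T_def by (auto intro: SUP_upper)
      ultimately have "cl U (\<Union>X) \<subseteq> E" by (rule cl_least)
      then have le: "Sup (e ` cl U (\<Union>X)) \<le> T" unfolding E_def by (auto intro: SUP_least)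
      have ge: "T \<le> Sup (e ` cl U (\<Union>X))" unfolding T_def
        using cl_sub[of "\<Union>X" U] by (rule SUP_subset_mono[OF _ order_refl])
      have "f (sup_in (ideals U) X) = T" unfolding f_def sup_in_cl using le ge by (rule order.antisym)
      also have "T = Sup (f ` X)" unfolding T_def f_def using SUP_UNION[where g="\<lambda>y. y" and A=X and f=e] by simp
      finally show "f (sup_in (ideals U) X) = Sup (f ` X)" .
    qed
    then show ?thesis by blast
  qed
  show ?thesis using fwd bwd uniq by blast
qed

end
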